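(* Let $N\ge2$. For an integer $M\ge1$ and $q\in[0,1]^M$ say that $q$ satisfies $(E_M)$ if $M+(d^2-1)\sum_{i=1}^Mq_i=d(d-1)+\frac{(\sum_{i=1}^M\sqrt{(d^2-1)q_i+1})^2}{M+d-1}$. Let $p\in[0,1]^{N-1}$ satisfy $(E_{N-1})$. Then $(p,0)\in[0,1]^N$ satisfies $(E_N)$ if and only if $p=e_i$ for some $1\le i\le N-1$, where $e_i$ is the $i$-th standard basis vector of $\mathbb R^{N-1}$.
   Context: $d\ge2$ is an integer (the Hilbert space dimension). *)

theory Defs
  imports "HOL-Analysis.Analysis"
begin

text \<open>Vectors q in [0,1]^M are represented as functions nat => real, with
components q 0, ..., q (M-1) (0-based indexing). Condition (E_M) for dimension d.\<close>

definition in_unit_cube :: "nat \<Rightarrow> (nat \<Rightarrow> real) \<Rightarrow> bool" where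
  "in_unit_cube M q \<longleftrightarrow> (\<forall>i<M. 0 \<le> q i \<and> q i \<le> 1)"

definition satisfies_E :: "nat \<Rightarrow> nat \<Rightarrow> (nat \<Rightarrow> real) \<Rightarrow> bool" where
  "satisfies_E d M q \<longleftrightarrow>
     real M + (real d ^ 2 - 1) * (\<Sum>i<M. q i)
       = real d * (real d - 1)
         + (\<Sum>i<M. sqrt ((real d ^ 2 - 1) * q i + 1)) ^ 2 / (real M + real d - 1)"

end

theory Submission
  imports Defs
begin

lemma chord:
  fixes d :: nat and q :: real
  assumes "d \<ge> 2" "0 \<le> q" "q \<le> 1"
  shows "1 + (real d - 1) * q \<le> sqrt ((real d ^ 2 - 1) * q + 1)"
    and "sqrt ((real d ^ 2 - 1) * q + 1) = 1 + (real d - 1) * q \<longleftrightarrow> q = 0 \<or> q = 1"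
proof -
  have d: "real d \<ge> 2" using assms by simp
  have sq: "(1 + (real d - 1) * q)^2 - ((real d ^ 2 - 1) * q + 1) = (real d - 1) * q * (q - 1) * (real d - 1)"
    by (simp add: algebra_simps power2_eq_square)
  have nn: "(real d - 1) * q * (q - 1) * (real d - 1) \<le> 0"
    using d assms by (simp add: mult_nonneg_nonpos mult_nonpos_nonneg)
  have pos: "0 \<le> 1 + (real d - 1) * q" using d assms by simp
  have pos2: "0 \<le> (real d ^ 2 - 1) * q + 1" using d assms
    by (smt (verit) mult_nonneg_nonneg one_le_power)
  show "1 + (real d - 1) * q \<le> sqrt ((real d ^ 2 - 1) * q + 1)"
  proof -
    have "sqrt ((1 + (real d - 1) * q)^2) \<le> sqrt ((real d ^ 2 - 1) * q + 1)"
      using sq nn by (intro real_sqrt_le_mono) linarith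
    thus ?thesis using pos by simp
  qed
  show "sqrt ((real d ^ 2 - 1) * q + 1) = 1 + (real d - 1) * q \<longleftrightarrow> q = 0 \<or> q = 1"
  proof
    assume "sqrt ((real d ^ 2 - 1) * q + 1) = 1 + (real d - 1) * q"
    hence "(1 + (real d - 1) * q)^2 = (real d ^ 2 - 1) * q + 1" using pos2
      by (metis real_sqrt_pow2)
    hence "(real d - 1) * q * (q - 1) * (real d - 1) = 0" using sq by linarith
    thus "q = 0 \<or> q = 1" using d by auto
  next
    assume "q = 0 \<or> q = 1"
    hence "(1 + (real d - 1) * q)^2 = (real d ^ 2 - 1) * q + 1" using sq by auto
    thus "sqrt ((real d ^ 2 - 1) * q + 1) = 1 + (real d - 1) * q"
      using pos by (metis real_sqrt_unique)
  qed
qed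

theorem mainTheorem17:
  fixes d N :: nat and p :: "nat \<Rightarrow> real"
  assumes "d \<ge> 2" and "N \<ge> 2"
    and "in_unit_cube (N - 1) p"
    and "satisfies_E d (N - 1) p"
  shows "satisfies_E d N (p(N - 1 := 0)) \<longleftrightarrow>
         (\<exists>i<N - 1. \<forall>j<N - 1. p j = (if j = i then 1 else 0))"
proof -
  define M where "M = N - 1"
  have NM: "N = Suc M" using assms M_def by simp
  have M1: "M \<ge> 1" using assms M_def by simp
  have d: "real d \<ge> 2" using assms by simp
  define D where "D = real d ^ 2 - 1"
  define f where "f = (\<lambda>x. sqrt (D * x + 1))"
  define S where "S = (\<Sum>i<M. f (p i))"
  define Q where "Q = (\<Sum>i<M. p i)"
  define K where "K = real M + real d - 1"
  have Kpos: "K > 0" using d K_def by simp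
  have cube: "\<And>i. i < M \<Longrightarrow> 0 \<le> p i \<and> p i \<le> 1"
    using assms(3) M_def in_unit_cube_def by auto
  have EM: "real M + D * Q = real d * (real d - 1) + S^2 / K"
    using assms(4) unfolding satisfies_E_def M_def[symmetric] D_def S_def f_def Q_def K_def by simp
  have sQ: "(\<Sum>i<N. (p(M := 0)) i) = Q"
    unfolding NM Q_def by (simp only: sum.lessThan_Suc) (auto intro!: sum.cong)
  have sS: "(\<Sum>i<N. sqrt ((real d ^ 2 - 1) * (p(M := 0)) i + 1)) = S + 1"
    unfolding NM S_def f_def D_def by (simp only: sum.lessThan_Suc) (auto intro!: sum.cong)
  have EN_iff: "satisfies_E d N (p(N - 1 := 0)) \<longleftrightarrow> real M + 1 + D * Q = real d * (real d - 1) + (S+1)^2 / (K + 1)"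
  proof -
    have KN: "real N + real d - 1 = K + 1" "real N = real M + 1" using NM K_def by auto
    show ?thesis unfolding satisfies_E_def M_def[symmetric] sQ sS unfolding KN(1) unfolding KN(2) D_def[symmetric] by simp
  qed
  have step1: "satisfies_E d N (p(N - 1 := 0)) \<longleftrightarrow> S = K"
  proof -
    have "satisfies_E d N (p(N - 1 := 0)) \<longleftrightarrow> S^2 / K + 1 = (S+1)^2/(K+1)"
      using EN_iff EM by linarith
    also have "\<dots> \<longleftrightarrow> (S^2 + K) * (K+1) = K * (S+1)^2"
      using Kpos by (simp add: field_simps)
    also have "\<dots> \<longleftrightarrow> (S - K)^2 = 0"
      by (simp add: algebra_simps power2_eq_square)
    also have "\<dots> \<longleftrightarrow> S = K" by simp
    finally show ?thesis .
  qed
  have chordM: "\<And>i. i < M \<Longrightarrow> 1 + (real d - 1) * p i \<le> f (p i)"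
    using chord(1)[OF assms(1)] cube unfolding f_def D_def by blast
  have chordE: "\<And>i. i < M \<Longrightarrow> f (p i) = 1 + (real d - 1) * p i \<longleftrightarrow> p i = 0 \<or> p i = 1"
    using chord(2)[OF assms(1)] cube unfolding f_def D_def by blast
  have sumchord: "(\<Sum>i<M. 1 + (real d - 1) * p i) = real M + (real d - 1) * Q"
    unfolding Q_def by (simp add: sum.distrib sum_distrib_left)
  show ?thesis unfolding step1 unfolding M_def[symmetric]
  proof
    assume SK: "S = K"
    have "S^2 / K = K" using SK Kpos by (simp add: power2_eq_square)
    hence "real M + D * Q = real d * (real d - 1) + K" using EM by simp
    also have "\<dots> = real M + D" by (simp add: K_def D_def algebra_simps power2_eq_square)
    finally have "D * Q = D" by simp
    moreover have "D > 0"
    proof -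
      have "real d * real d \<ge> 2 * 2" using d by (intro mult_mono) auto
      thus ?thesis by (simp add: D_def power2_eq_square)
    qed
    ultimately have Q1: "Q = 1" by simp
    have "(\<Sum>i<M. f (p i) - (1 + (real d - 1) * p i)) = 0"
      using SK Q1 sumchord by (simp add: sum_subtractf S_def K_def)
    hence "\<forall>i\<in>{..<M}. f (p i) - (1 + (real d - 1) * p i) = 0"
      using chordM by (subst sum_nonneg_eq_0_iff[symmetric]) auto
    hence bin: "\<And>i. i < M \<Longrightarrow> p i = 0 \<or> p i = 1" using chordE by auto
    obtain i where i: "i < M" "p i = 1"
    proof -
      { assume "\<forall>i<M. p i \<noteq> 1"
        hence "\<forall>i<M. p i = 0" using bin by blast
        hence "Q = 0" unfolding Q_def by simp
        hence False using Q1 by simp }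
      thus ?thesis using that by blast
    qed
    have "\<forall>j<M. p j = (if j = i then 1 else 0)"
    proof (intro allI impI)
      fix j assume j: "j < M"
      show "p j = (if j = i then 1 else 0)"
      proof (cases "j = i")
        case True thus ?thesis using i by simp
      next
        case False
        have "(\<Sum>k\<in>{i,j}. p k) \<le> Q" unfolding Q_def
          using i j cube by (intro sum_mono2) auto
        hence "p j \<le> 0" using False i Q1 by simp
        thus ?thesis using False bin j by force
      qed
    qed
    thus "\<exists>i<M. \<forall>j<M. p j = (if j = i then 1 else 0)" using i by blast
  next
    assume "\<exists>i<M. \<forall>j<M. p j = (if j = i then 1 else 0)"
    then obtain i where i: "i < M" and pj: "\<And>j. j < M \<Longrightarrow> p j = (if j = i then 1 else 0)" by blast
    have fj: "f (p j) = 1 + (real d - 1) * p j" if j: "j < M" for j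
    proof -
      have "p j = 0 \<or> p j = 1" using pj[OF j] by simp
      thus ?thesis using chordE[OF j] by blast
    qed
    have "S = (\<Sum>j<M. 1 + (real d - 1) * p j)" unfolding S_def
      by (rule sum.cong) (auto simp: fj)
    hence "S = real M + (real d - 1) * Q" using sumchord by simp
    moreover have "Q = 1"
    proof -
      have "Q = (\<Sum>j<M. if j = i then 1 else 0)" unfolding Q_def
        by (rule sum.cong) (auto simp: pj)
      also have "\<dots> = 1" using i by simp
      finally show ?thesis .
    qed
    ultimately show "S = K" unfolding K_def by simp
  qed
qed

end
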